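(* Let $\{\mathcal{L}_\gamma\}$ be a family of scale-invariant functions $\mathbb{R}^d\to\mathbb{R}$ ($\mathcal{L}_\gamma(cx)=\mathcal{L}_\gamma(x)$ for all $c>0$, $x\ne0$) indexed by a random data point $\gamma$, $\mathcal{L}=\mathbb{E}\mathcal{L}_\gamma$, and $\lambda>0$. For batch size $B$ and learning rate $\eta$, consider SGD with weight decay $x_{k+1}=x_k-\eta\nabla(\mathcal{L}_{\mathcal{B}_k}(x_k)+\frac\lambda2|x_k|^2)$, where $\mathcal{L}_{\mathcal{B}_k}$ is the average of $\mathcal{L}_\gamma$ over an independent mini-batch $\mathcal{B}_k$ of $B$ samples, so that its gradient-noise covariance $\Sigma^B(x)$ satisfies $\Sigma^B(x)=\kappa\Sigma^{\kappa B}(x)$. Assume the limits $R^{B,\eta}_\infty=\lim_t\mathbb{E}|x_t|^2$, $G^{B,\eta}_\infty=\lim_t\mathbb{E}|\nabla\mathcal{L}(x_t)|^2$, $N^{B,\eta}_\infty=\lim_t\mathbb{E}\,\mathrm{Tr}[\Sigma^B(x_t)]$ exist for the relevant $(B,\eta)$. Then for any $B,\eta,C,\kappa$ such that $$\frac{N_\infty^{\kappa B,\kappa\eta}}{G_\infty^{\kappa B,\kappa\eta}}<\Big(1-\frac1\kappa\Big)\frac{1}{C^2-1}-\frac1\kappa,$$ SGD with batch size $B$ and learning rate $\eta$ does not exhibit $(C,\kappa)$-Linear Scaling Invariance.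
   Context: SGD with batch size $B$ and LR $\eta$ exhibits $(C,\kappa)$-Linear Scaling Invariance if, for a constant $C$ with $0<C<\sqrt\kappa$, $\frac1C\le\frac{R_\infty^{B,\eta}}{R_\infty^{\kappa B,\kappa\eta}},\ \frac{N_\infty^{B,\eta}}{\kappa N_\infty^{\kappa B,\kappa\eta}},\ \frac{G_\infty^{B,\eta}}{G_\infty^{\kappa B,\kappa\eta}}\le C.$ *)

theory Defs
  imports "HOL-Probability.Probability"
begin

(* Gradient of f at x (convention: 0 where f is not differentiable, e.g. at the origin
   for a scale-invariant function). *)
definition grad :: "('a::euclidean_space \<Rightarrow> real) \<Rightarrow> 'a \<Rightarrow> 'a" where
  "grad f x = (if \<exists>g. GDERIV f x :> g then (SOME g. GDERIV f x :> g) else 0)"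

definition scale_invariant :: "('a::real_normed_vector \<Rightarrow> real) \<Rightarrow> bool" where
  "scale_invariant f \<longleftrightarrow> (\<forall>c x. c > 0 \<longrightarrow> x \<noteq> 0 \<longrightarrow> f (c *\<^sub>R x) = f x)"

definition popL :: "'g measure \<Rightarrow> ('g \<Rightarrow> 'a \<Rightarrow> real) \<Rightarrow> 'a \<Rightarrow> real" where
  "popL D \<L> y = (\<integral>\<gamma>. \<L> \<gamma> y \<partial>D)"

definition bloss :: "('g \<Rightarrow> 'a \<Rightarrow> real) \<Rightarrow> nat \<Rightarrow> (nat \<Rightarrow> 'g) \<Rightarrow> 'a \<Rightarrow> real" where
  "bloss \<L> B b y = (\<Sum>j<B. \<L> (b j) y) / real B"

definition batch_measure :: "'g measure \<Rightarrow> nat \<Rightarrow> (nat \<Rightarrow> 'g) measure" where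
  "batch_measure D B = PiM {..<B} (\<lambda>_. D)"

definition noise_tr :: "'g measure \<Rightarrow> ('g \<Rightarrow> 'a::euclidean_space \<Rightarrow> real) \<Rightarrow> nat \<Rightarrow> 'a \<Rightarrow> real" where
  "noise_tr D \<L> B x =
     (\<Sum>i\<in>Basis. \<integral>b. ((grad (bloss \<L> B b) x
          - (\<integral>b'. grad (bloss \<L> B b') x \<partial>batch_measure D B)) \<bullet> i)\<^sup>2 \<partial>batch_measure D B)"

(* underlying sample space: an i.i.d. stream of data points; the k-th mini-batch
   consists of the samples omega (k*B), ..., omega (k*B + B - 1) *)
definition sample_space :: "'g measure \<Rightarrow> (nat \<Rightarrow> 'g) measure" where
  "sample_space D = PiM UNIV (\<lambda>_::nat. D)"

definition kth_batch :: "nat \<Rightarrow> (nat \<Rightarrow> 'g) \<Rightarrow> nat \<Rightarrow> (nat \<Rightarrow> 'g)" where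
  "kth_batch B \<omega> k = (\<lambda>j. \<omega> (k * B + j))"

primrec sgd :: "('g \<Rightarrow> 'a::euclidean_space \<Rightarrow> real) \<Rightarrow> real \<Rightarrow> nat \<Rightarrow> real \<Rightarrow> 'a
                 \<Rightarrow> (nat \<Rightarrow> 'g) \<Rightarrow> nat \<Rightarrow> 'a" where
  "sgd \<L> lam B \<eta> x0 \<omega> 0 = x0"
| "sgd \<L> lam B \<eta> x0 \<omega> (Suc k) =
     sgd \<L> lam B \<eta> x0 \<omega> k
     - \<eta> *\<^sub>R grad (\<lambda>y. bloss \<L> B (kth_batch B \<omega> k) y + lam / 2 * (norm y)\<^sup>2)
                    (sgd \<L> lam B \<eta> x0 \<omega> k)"

definition Rseq where
  "Rseq D \<L> lam B \<eta> x0 t = (\<integral>\<omega>. (norm (sgd \<L> lam B \<eta> x0 \<omega> t))\<^sup>2 \<partial>sample_space D)"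
definition Gseq where
  "Gseq D \<L> lam B \<eta> x0 t =
     (\<integral>\<omega>. (norm (grad (popL D \<L>) (sgd \<L> lam B \<eta> x0 \<omega> t)))\<^sup>2 \<partial>sample_space D)"
definition Nseq where
  "Nseq D \<L> lam B \<eta> x0 t = (\<integral>\<omega>. noise_tr D \<L> B (sgd \<L> lam B \<eta> x0 \<omega> t) \<partial>sample_space D)"

definition R_inf where "R_inf D \<L> lam B \<eta> x0 = lim (Rseq D \<L> lam B \<eta> x0)"
definition G_inf where "G_inf D \<L> lam B \<eta> x0 = lim (Gseq D \<L> lam B \<eta> x0)"
definition N_inf where "N_inf D \<L> lam B \<eta> x0 = lim (Nseq D \<L> lam B \<eta> x0)"

definition limits_exist where
  "limits_exist D \<L> lam B \<eta> x0 \<longleftrightarrow>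
     (\<forall>t. integrable (sample_space D) (\<lambda>\<omega>. (norm (sgd \<L> lam B \<eta> x0 \<omega> t))\<^sup>2)
        \<and> integrable (sample_space D)
             (\<lambda>\<omega>. (norm (grad (popL D \<L>) (sgd \<L> lam B \<eta> x0 \<omega> t)))\<^sup>2)
        \<and> integrable (sample_space D) (\<lambda>\<omega>. noise_tr D \<L> B (sgd \<L> lam B \<eta> x0 \<omega> t)))
   \<and> convergent (Rseq D \<L> lam B \<eta> x0)
   \<and> convergent (Gseq D \<L> lam B \<eta> x0)
   \<and> convergent (Nseq D \<L> lam B \<eta> x0)"

definition LSI where
  "LSI D \<L> lam x0 B \<eta> B' C \<kappa> \<longleftrightarrow>
     0 < C \<and> C < sqrt \<kappa> \<and>
     1 / C \<le> R_inf D \<L> lam B \<eta> x0 / R_inf D \<L> lam B' (\<kappa> * \<eta>) x0 \<and>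
     R_inf D \<L> lam B \<eta> x0 / R_inf D \<L> lam B' (\<kappa> * \<eta>) x0 \<le> C \<and>
     1 / C \<le> N_inf D \<L> lam B \<eta> x0 / (\<kappa> * N_inf D \<L> lam B' (\<kappa> * \<eta>) x0) \<and>
     N_inf D \<L> lam B \<eta> x0 / (\<kappa> * N_inf D \<L> lam B' (\<kappa> * \<eta>) x0) \<le> C \<and>
     1 / C \<le> G_inf D \<L> lam B \<eta> x0 / G_inf D \<L> lam B' (\<kappa> * \<eta>) x0 \<and>
     G_inf D \<L> lam B \<eta> x0 / G_inf D \<L> lam B' (\<kappa> * \<eta>) x0 \<le> C"

end

theory Submission
  imports Defs
begin


lemma gderiv_unique:
  assumes "GDERIV f x :> a" "GDERIV f x :> b" shows "a = b"
proof -
  have "(\<lambda>h. h \<bullet> a) = (\<lambda>h. h \<bullet> b)"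
    using has_derivative_unique assms unfolding gderiv_def by blast
  then have "(a - b) \<bullet> a = (a - b) \<bullet> b" by metis
  then have "(a - b) \<bullet> (a - b) = 0" by (simp add: inner_diff_right)
  then show ?thesis by simp
qed

lemma grad_eq: assumes "GDERIV f x :> g" shows "grad f x = g"
proof -
  have "GDERIV f x :> (SOME g. GDERIV f x :> g)" using assms by (rule someI)
  then show ?thesis unfolding grad_def using assms gderiv_unique by auto
qed

lemma grad_nd: assumes "\<not> (\<exists>g. GDERIV f x :> g)" shows "grad f x = 0"
  using assms unfolding grad_def by auto

lemma scale_line_deriv:
  assumes "GDERIV f (t *\<^sub>R v) :> g"
  shows "((\<lambda>s. f (s *\<^sub>R v)) has_real_derivative (v \<bullet> g)) (at t)"
proof -
  have l: "((\<lambda>s. s *\<^sub>R v) has_derivative (\<lambda>s. s *\<^sub>R v)) (at t)"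
    by (intro derivative_eq_intros) auto
  have "((\<lambda>s. f (s *\<^sub>R v)) has_derivative (\<lambda>s. (s *\<^sub>R v) \<bullet> g)) (at t)"
    using has_derivative_compose[OF l assms[unfolded gderiv_def]] by simp
  moreover have "(\<lambda>s. s * (v \<bullet> g)) = (*) (v \<bullet> g)" by (auto simp: fun_eq_iff)
  ultimately show ?thesis unfolding has_field_derivative_def by simp
qed

lemma scale_inv_orth:
  assumes si: "scale_invariant f" and x: "x \<noteq> 0" and g: "GDERIV f x :> g"
  shows "x \<bullet> g = 0"
proof -
  have d: "((\<lambda>s. f (s *\<^sub>R x)) has_real_derivative (x \<bullet> g)) (at 1)"
    using scale_line_deriv[of f 1 x g] g by simp
  have "((\<lambda>s. f x) has_real_derivative (x \<bullet> g)) (at 1)"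
    by (rule has_field_derivative_transform_within_open[OF d, of "{0<..}"])
       (use si x in \<open>auto simp: scale_invariant_def\<close>)
  moreover have "((\<lambda>s. f x) has_real_derivative 0) (at 1)" by simp
  ultimately show ?thesis using DERIV_unique by blast
qed

lemma scale_inv_zero:
  assumes si: "scale_invariant f" and g: "GDERIV f 0 :> g"
  shows "g = 0"
proof (rule ccontr)
  assume gn: "g \<noteq> 0"
  let ?h = "\<lambda>s. f (s *\<^sub>R g)"
  have d: "(?h has_real_derivative (g \<bullet> g)) (at 0)"
    using scale_line_deriv[of f 0 g g] g by simp
  have ev: "eventually (\<lambda>s. ?h s = f g) (at_right 0)"
    using si gn unfolding scale_invariant_def eventually_at_right_field
    by (intro exI[of _ 1]) auto
  have "isCont ?h 0" using DERIV_isCont[OF d] .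
  then have "(?h \<longlongrightarrow> ?h 0) (at_right 0)"
    by (simp add: isCont_def filterlim_at_split)
  moreover have "(?h \<longlongrightarrow> f g) (at_right 0)"
    using tendsto_eventually[OF ev] by simp
  ultimately have h0: "?h 0 = f g"
    using tendsto_unique[of "at_right (0::real)"] by (metis trivial_limit_at_right_real)
  have "((\<lambda>y. (?h y - ?h 0) / (y - 0)) \<longlongrightarrow> g \<bullet> g) (at 0)"
    using d unfolding has_field_derivative_iff by simp
  then have t1: "((\<lambda>y. (?h y - ?h 0) / (y - 0)) \<longlongrightarrow> g \<bullet> g) (at_right 0)"
    by (simp add: filterlim_at_split)
  have "eventually (\<lambda>y. (?h y - ?h 0) / (y - 0) = 0) (at_right 0)"
    using ev by (rule eventually_mono) (use h0 in simp)
  then have t2: "((\<lambda>y. (?h y - ?h 0) / (y - 0)) \<longlongrightarrow> 0) (at_right 0)"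
    by (rule tendsto_eventually)
  have "g \<bullet> g = 0"
    using tendsto_unique[OF _ t1 t2] by simp
  with gn show False by simp
qed

lemma grad_scale_inv_zero:
  assumes "scale_invariant f" shows "grad f 0 = 0"
  using assms scale_inv_zero grad_eq grad_nd by metis

lemma gderiv_sq:
  "GDERIV (\<lambda>y. lam / 2 * (norm y)\<^sup>2) x :> lam *\<^sub>R x"
  unfolding gderiv_def power2_norm_eq_inner
  by (rule derivative_eq_intros refl | simp add: inner_commute algebra_simps)+

lemma grad_add_sq:
  fixes f :: "'a::euclidean_space \<Rightarrow> real"
  assumes "(\<exists>g. GDERIV f x :> g) \<or> (x = 0 \<and> scale_invariant f)"
  shows "grad (\<lambda>y. f y + lam / 2 * (norm y)\<^sup>2) x = grad f x + lam *\<^sub>R x"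
proof (cases "\<exists>g. GDERIV f x :> g")
  case True
  then obtain g where g: "GDERIV f x :> g" by blast
  show ?thesis using GDERIV_add[OF g gderiv_sq] grad_eq g by metis
next
  case False
  have "\<not> (\<exists>g. GDERIV (\<lambda>y. f y + lam / 2 * (norm y)\<^sup>2) x :> g)"
  proof
    assume "\<exists>g. GDERIV (\<lambda>y. f y + lam / 2 * (norm y)\<^sup>2) x :> g"
    then obtain g where "GDERIV (\<lambda>y. f y + lam / 2 * (norm y)\<^sup>2) x :> g" by blast
    from GDERIV_diff[OF this gderiv_sq[of lam x]] have "GDERIV f x :> g - lam *\<^sub>R x" by simp
    with False show False by blast
  qed
  then show ?thesis using False assms by (simp add: grad_nd)
qed




lemma bloss_si:
  assumes "\<And>\<gamma>. scale_invariant (L \<gamma>)" shows "scale_invariant (bloss L B b)"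
  using assms unfolding scale_invariant_def bloss_def by simp

lemma bloss_gderiv:
  fixes L :: "'g \<Rightarrow> 'a::euclidean_space \<Rightarrow> real"
  assumes diff: "\<And>\<gamma> x. x \<noteq> 0 \<Longrightarrow> \<exists>g. GDERIV (L \<gamma>) x :> g" and x: "x \<noteq> 0"
  shows "GDERIV (bloss L B b) x :> (1 / real B) *\<^sub>R (\<Sum>j<B. grad (L (b j)) x)"
proof -
  have g: "GDERIV (L \<gamma>) x :> grad (L \<gamma>) x" for \<gamma>
    using diff[OF x] grad_eq by metis
  have "((\<lambda>y. \<Sum>j<B. L (b j) y) has_derivative (\<lambda>h. \<Sum>j<B. h \<bullet> grad (L (b j)) x)) (at x)"
    by (rule has_derivative_sum) (use g in \<open>auto simp: gderiv_def\<close>)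
  then have "((\<lambda>y. (1 / real B) * (\<Sum>j<B. L (b j) y)) has_derivative
      (\<lambda>h. (1 / real B) * (\<Sum>j<B. h \<bullet> grad (L (b j)) x))) (at x)"
    by (rule has_derivative_mult_right)
  then show ?thesis unfolding gderiv_def bloss_def
    by (simp add: inner_sum_right)
qed

lemma grad_bloss:
  fixes L :: "'g \<Rightarrow> 'a::euclidean_space \<Rightarrow> real"
  assumes si: "\<And>\<gamma>. scale_invariant (L \<gamma>)"
    and diff: "\<And>\<gamma> x. x \<noteq> 0 \<Longrightarrow> \<exists>g. GDERIV (L \<gamma>) x :> g"
  shows "grad (bloss L B b) x = (1 / real B) *\<^sub>R (\<Sum>j<B. grad (L (b j)) x)"
proof (cases "x = 0")
  case True
  then show ?thesis using grad_scale_inv_zero[OF bloss_si[OF si]] grad_scale_inv_zero[OF si]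
    by simp
next
  case False
  then show ?thesis using grad_eq bloss_gderiv[where L=L and B=B and b=b, OF diff False] by blast
qed

lemma grad_step:
  fixes L :: "'g \<Rightarrow> 'a::euclidean_space \<Rightarrow> real"
  assumes si: "\<And>\<gamma>. scale_invariant (L \<gamma>)"
    and diff: "\<And>\<gamma> x. x \<noteq> 0 \<Longrightarrow> \<exists>g. GDERIV (L \<gamma>) x :> g"
  shows "grad (\<lambda>y. bloss L B b y + lam / 2 * (norm y)\<^sup>2) x = grad (bloss L B b) x + lam *\<^sub>R x"
  by (rule grad_add_sq) (use bloss_gderiv[where L=L and B=B and b=b, OF diff] bloss_si[where L=L and B=B and b=b, OF si] in blast)

lemma bloss_orth:
  fixes L :: "'g \<Rightarrow> 'a::euclidean_space \<Rightarrow> real"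
  assumes si: "\<And>\<gamma>. scale_invariant (L \<gamma>)"
    and diff: "\<And>\<gamma> x. x \<noteq> 0 \<Longrightarrow> \<exists>g. GDERIV (L \<gamma>) x :> g"
  shows "x \<bullet> grad (bloss L B b) x = 0"
proof (cases "x = 0")
  case False
  show ?thesis using scale_inv_orth[OF bloss_si[where L=L and B=B and b=b, OF si] False bloss_gderiv[where L=L and B=B and b=b, OF diff False]]
    grad_eq[OF bloss_gderiv[where L=L and B=B and b=b, OF diff False]] by simp
qed simp

lemma norm_step:
  fixes x g :: "'a::real_inner"
  assumes "x \<bullet> g = 0"
  shows "(norm (x - eta *\<^sub>R (g + lam *\<^sub>R x)))\<^sup>2 = (1 - eta * lam)\<^sup>2 * (norm x)\<^sup>2 + eta\<^sup>2 * (norm g)\<^sup>2"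
proof -
  have "x - eta *\<^sub>R (g + lam *\<^sub>R x) = (1 - eta * lam) *\<^sub>R x - eta *\<^sub>R g"
    by (simp add: algebra_simps)
  moreover have "(norm ((1 - eta * lam) *\<^sub>R x - eta *\<^sub>R g))\<^sup>2 = (1 - eta * lam)\<^sup>2 * (norm x)\<^sup>2 + eta\<^sup>2 * (norm g)\<^sup>2"
    using assms unfolding power2_norm_eq_inner
    by (simp add: inner_diff_left inner_diff_right inner_commute power2_eq_square algebra_simps)
  ultimately show ?thesis by simp
qed




locale sgd_setting =
  fixes D :: "'g measure" and L :: "'g \<Rightarrow> 'a::euclidean_space \<Rightarrow> real"
  assumes D: "prob_space D"
    and scale_inv: "\<And>\<gamma>. scale_invariant (L \<gamma>)"
    and diff: "\<And>\<gamma> x. x \<noteq> 0 \<Longrightarrow> \<exists>g. GDERIV (L \<gamma>) x :> g"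
    and meas: "(\<lambda>(\<gamma>, x). grad (L \<gamma>) x) \<in> borel_measurable (D \<Otimes>\<^sub>M borel)"
    and sq_int: "\<And>x. x \<noteq> 0 \<Longrightarrow> integrable D (\<lambda>\<gamma>. (norm (grad (L \<gamma>) x))\<^sup>2)"
    and grad_L: "\<And>x. x \<noteq> 0 \<Longrightarrow> GDERIV (popL D L) x :> (\<integral>\<gamma>. grad (L \<gamma>) x \<partial>D)"
begin

abbreviation "X lam B eta x0 \<omega> t \<equiv> sgd L lam B eta x0 \<omega> t"

definition gb :: "nat \<Rightarrow> (nat \<Rightarrow> 'g) \<Rightarrow> 'a \<Rightarrow> 'a" where
  "gb B b x = (1 / real B) *\<^sub>R (\<Sum>j<B. grad (L (b j)) x)"

lemma grad_bloss': "grad (bloss L B b) x = gb B b x"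
  unfolding gb_def by (rule grad_bloss[OF scale_inv diff])

lemma bloss_cong: "(\<And>j. j < B \<Longrightarrow> b j = b' j) \<Longrightarrow> bloss L B b = bloss L B b'"
  unfolding bloss_def by (intro ext) (auto intro!: sum.cong arg_cong2[where f="(/)"])

lemma gb_cong: "(\<And>j. j < B \<Longrightarrow> b j = b' j) \<Longrightarrow> gb B b x = gb B b' x"
  unfolding gb_def by (auto intro!: sum.cong arg_cong2[where f="scaleR"])

lemma sgd_Suc':
  "X lam B eta x0 \<omega> (Suc k) = X lam B eta x0 \<omega> k
     - eta *\<^sub>R (gb B (kth_batch B \<omega> k) (X lam B eta x0 \<omega> k) + lam *\<^sub>R X lam B eta x0 \<omega> k)"
proof -
  have "grad (\<lambda>y. bloss L B (kth_batch B \<omega> k) y + lam / 2 * (norm y)\<^sup>2) (X lam B eta x0 \<omega> k)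
     = grad (bloss L B (kth_batch B \<omega> k)) (X lam B eta x0 \<omega> k) + lam *\<^sub>R X lam B eta x0 \<omega> k"
    by (rule grad_step[OF scale_inv diff])
  then show ?thesis by (simp add: grad_bloss')
qed

lemma gb_orth: "x \<bullet> gb B b x = 0"
  unfolding grad_bloss'[symmetric] by (rule bloss_orth[OF scale_inv diff])

lemma sgd_norm:
  "(norm (X lam B eta x0 \<omega> (Suc k)))\<^sup>2 = (1 - eta * lam)\<^sup>2 * (norm (X lam B eta x0 \<omega> k))\<^sup>2
     + eta\<^sup>2 * (norm (gb B (kth_batch B \<omega> k) (X lam B eta x0 \<omega> k)))\<^sup>2"
  unfolding sgd_Suc' by (rule norm_step[OF gb_orth])

lemma sgd_prefix:
  "(\<And>i. i < k * B \<Longrightarrow> \<omega> i = \<omega>' i) \<Longrightarrow> X lam B eta x0 \<omega> k = X lam B eta x0 \<omega>' k"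
proof (induction k)
  case 0 then show ?case by simp
next
  case (Suc k)
  have IH: "X lam B eta x0 \<omega> k = X lam B eta x0 \<omega>' k"
    using Suc by (intro Suc.IH) (simp add: algebra_simps)
  have "bloss L B (kth_batch B \<omega> k) = bloss L B (kth_batch B \<omega>' k)"
    by (rule bloss_cong) (use Suc.prems in \<open>auto simp: kth_batch_def algebra_simps\<close>)
  then show ?case by (simp add: IH)
qed

lemma gsum_meas:
  assumes c: "\<And>j. j < B \<Longrightarrow> (\<lambda>m. c m j) \<in> measurable M D" and x: "x \<in> borel_measurable M"
  shows "(\<lambda>m. gb B (c m) (x m)) \<in> borel_measurable M"
proof -
  have "(\<lambda>m. grad (L (c m j)) (x m)) \<in> borel_measurable M" if "j < B" for j
    using that measurable_compose[OF measurable_Pair[OF c x] meas] by simp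
  then have "(\<lambda>m. \<Sum>j<B. grad (L (c m j)) (x m)) \<in> borel_measurable M"
    by (intro borel_measurable_sum) simp
  then show ?thesis unfolding gb_def
    by (intro borel_measurable_scaleR borel_measurable_const)
qed

abbreviation "Sp \<equiv> sample_space D"

lemma sgd_meas: "(\<lambda>\<omega>. X lam B eta x0 \<omega> k) \<in> borel_measurable Sp"
proof (induction k)
  case 0 then show ?case by simp
next
  case (Suc k)
  have c: "(\<lambda>\<omega>. kth_batch B \<omega> k j) \<in> measurable Sp D" for j
    unfolding kth_batch_def sample_space_def by measurable
  show ?case unfolding sgd_Suc'
    by (intro borel_measurable_diff borel_measurable_scaleR borel_measurable_add borel_measurable_const
        gsum_meas[OF c Suc] Suc)
qed

end



context sgd_setting begin

lemma seqsp: "sequence_space D"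
  by (simp add: sequence_space_def product_prob_space_def product_sigma_finite_def
      product_prob_space_axioms_def D prob_space_imp_sigma_finite)

definition F :: "nat \<Rightarrow> 'a \<Rightarrow> ennreal" where
  "F B x = (\<integral>\<^sup>+ b. ennreal ((norm (gb B b x))\<^sup>2) \<partial>batch_measure D B)"

lemma F_Sp: "(\<integral>\<^sup>+ \<omega>'. ennreal ((norm (gb B \<omega>' x))\<^sup>2) \<partial>Sp) = F B x"
proof -
  interpret sequence_space D by (rule seqsp)
  have gm[measurable]: "(\<lambda>b. gb B b x) \<in> borel_measurable (PiM {..<B} (\<lambda>_. D))"
    by (intro gsum_meas measurable_component_singleton) auto
  have m: "(\<lambda>b. ennreal ((norm (gb B b x))\<^sup>2)) \<in> borel_measurable (PiM {..<B} (\<lambda>_. D))"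
    by measurable
  have "F B x = (\<integral>\<^sup>+ b. ennreal ((norm (gb B b x))\<^sup>2) \<partial>distr Sp (PiM {..<B} (\<lambda>_. D)) (\<lambda>\<omega>. restrict \<omega> {..<B}))"
    unfolding F_def batch_measure_def sample_space_def
    by (subst distr_PiM_restrict_finite) auto
  also have "\<dots> = (\<integral>\<^sup>+ \<omega>'. ennreal ((norm (gb B (restrict \<omega>' {..<B}) x))\<^sup>2) \<partial>Sp)"
    by (subst nn_integral_distr) (auto simp: sample_space_def intro: m measurable_restrict_subset)
  also have "\<dots> = (\<integral>\<^sup>+ \<omega>'. ennreal ((norm (gb B \<omega>' x))\<^sup>2) \<partial>Sp)"
    by (intro nn_integral_cong) (metis gb_cong restrict_apply' lessThan_iff)
  finally show ?thesis by simp
qed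

lemma tonelli:
  "(\<integral>\<^sup>+ \<omega>. ennreal ((norm (gb B (kth_batch B \<omega> t) (X lam B eta x0 \<omega> t)))\<^sup>2) \<partial>Sp)
   = (\<integral>\<^sup>+ \<omega>. F B (X lam B eta x0 \<omega> t) \<partial>Sp)"
proof -
  interpret sequence_space D by (rule seqsp)
  have SS: "Sp = S" by (simp add: sample_space_def)
  let ?f = "\<lambda>\<omega>. ennreal ((norm (gb B (kth_batch B \<omega> t) (X lam B eta x0 \<omega> t)))\<^sup>2)"
  have c: "(\<lambda>\<omega>. kth_batch B \<omega> t j) \<in> measurable Sp D" for j
    unfolding kth_batch_def sample_space_def by measurable
  have gm[measurable]: "(\<lambda>\<omega>. gb B (kth_batch B \<omega> t) (X lam B eta x0 \<omega> t)) \<in> borel_measurable Sp"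
    by (intro gsum_meas c sgd_meas)
  have fm: "?f \<in> borel_measurable S"
    unfolding SS[symmetric] by measurable
  have "(\<integral>\<^sup>+ \<omega>. ?f \<omega> \<partial>Sp) = (\<integral>\<^sup>+ \<omega>. ?f \<omega> \<partial>distr (S \<Otimes>\<^sub>M S) S (\<lambda>(\<omega>, \<omega>'). comb_seq (t * B) \<omega> \<omega>'))"
    by (simp add: PiM_comb_seq SS)
  also have "\<dots> = (\<integral>\<^sup>+ z. ?f (case z of (\<omega>, \<omega>') \<Rightarrow> comb_seq (t * B) \<omega> \<omega>') \<partial>(S \<Otimes>\<^sub>M S))"
    by (rule nn_integral_distr[OF measurable_comb_seq]) (use fm in simp)
  also have "\<dots> = (\<integral>\<^sup>+ \<omega>. \<integral>\<^sup>+ \<omega>'. ?f (comb_seq (t * B) \<omega> \<omega>') \<partial>S \<partial>S)"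
  proof -
    have fm2: "(\<lambda>z. ?f (case z of (\<omega>, \<omega>') \<Rightarrow> comb_seq (t * B) \<omega> \<omega>')) \<in> borel_measurable (S \<Otimes>\<^sub>M S)"
      by (rule measurable_compose[OF measurable_comb_seq fm])
    show ?thesis using P.nn_integral_fst[OF fm2] by simp
  qed
  also have "\<dots> = (\<integral>\<^sup>+ \<omega>. \<integral>\<^sup>+ \<omega>'. ennreal ((norm (gb B \<omega>' (X lam B eta x0 \<omega> t)))\<^sup>2) \<partial>S \<partial>S)"
  proof (intro nn_integral_cong)
    fix \<omega> \<omega>' :: "nat \<Rightarrow> 'g"
    have "kth_batch B (comb_seq (t * B) \<omega> \<omega>') t = \<omega>'"
      by (auto simp: kth_batch_def comb_seq_def fun_eq_iff)
    moreover have "X lam B eta x0 (comb_seq (t * B) \<omega> \<omega>') t = X lam B eta x0 \<omega> t"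
      by (rule sgd_prefix) (simp add: comb_seq_less)
    ultimately show "?f (comb_seq (t * B) \<omega> \<omega>') = ennreal ((norm (gb B \<omega>' (X lam B eta x0 \<omega> t)))\<^sup>2)"
      by simp
  qed
  also have "\<dots> = (\<integral>\<^sup>+ \<omega>. F B (X lam B eta x0 \<omega> t) \<partial>Sp)"
    using F_Sp SS by simp
  finally show ?thesis .
qed

end



context sgd_setting begin

lemma noise_nonneg: "0 \<le> noise_tr D L B x"
  unfolding noise_tr_def by (intro sum_nonneg integral_nonneg) auto

lemma BM_prob: "prob_space (batch_measure D B)"
  unfolding batch_measure_def by (rule prob_space_PiM) (simp add: D)

lemma G_meas: "(\<lambda>\<gamma>. grad (L \<gamma>) x) \<in> borel_measurable D"
proof -
  have "(\<lambda>\<gamma>. (\<gamma>, x)) \<in> measurable D (D \<Otimes>\<^sub>M borel)" by measurable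
  from measurable_compose[OF this meas] show ?thesis by simp
qed

lemma G_int: assumes "x \<noteq> 0" shows "integrable D (\<lambda>\<gamma>. grad (L \<gamma>) x)"
proof -
  interpret prob_space D by (rule D)
  have "integrable D (\<lambda>\<gamma>. 1 + (norm (grad (L \<gamma>) x))\<^sup>2)"
    using sq_int[OF assms] by simp
  moreover have "norm v \<le> norm (1 + (norm v)\<^sup>2)" for v :: 'a
  proof -
    have "norm v \<le> 1 + (norm v)\<^sup>2" by (smt (verit) power2_eq_square mult_le_cancel_left1 norm_ge_zero zero_le_power2)
    then show ?thesis by simp
  qed
  ultimately show ?thesis
    by (intro Bochner_Integration.integrable_bound[OF _ G_meas]) auto
qed

lemma comp_int:
  fixes f :: "'g \<Rightarrow> 'b::{banach, second_countable_topology}"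
  assumes j: "j < B" and f: "integrable D f" and fm: "f \<in> borel_measurable D"
  shows "integrable (batch_measure D B) (\<lambda>b. f (b j))"
    and "(\<integral>b. f (b j) \<partial>batch_measure D B) = (\<integral>\<gamma>. f \<gamma> \<partial>D)"
proof -
  have d: "distr (batch_measure D B) D (\<lambda>b. b j) = D"
    unfolding batch_measure_def by (rule distr_PiM_component) (use D j in auto)
  have m: "(\<lambda>b. b j) \<in> measurable (batch_measure D B) D"
    unfolding batch_measure_def by (rule measurable_component_singleton) (use j in auto)
  show "integrable (batch_measure D B) (\<lambda>b. f (b j))"
    using integrable_distr_eq[OF m fm] d f by simp
  show "(\<integral>b. f (b j) \<partial>batch_measure D B) = (\<integral>\<gamma>. f \<gamma> \<partial>D)"
    using integral_distr[OF m fm] d by simp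
qed

lemma popL_si: "scale_invariant (popL D L)"
  using scale_inv unfolding scale_invariant_def popL_def by simp

lemma gb0: "gb B b 0 = 0"
  unfolding gb_def using grad_scale_inv_zero[OF scale_inv] by simp

lemma F_eq:
  assumes B: "B > 0"
  shows "F B x = ennreal ((norm (grad (popL D L) x))\<^sup>2 + noise_tr D L B x)"
proof (cases "x = 0")
  case True
  have "noise_tr D L B x = 0"
    unfolding noise_tr_def grad_bloss' True gb0 by simp
  moreover have "grad (popL D L) x = 0"
    using True grad_scale_inv_zero[OF popL_si] by simp
  moreover have "F B x = 0" unfolding F_def True gb0 by simp
  ultimately show ?thesis by simp
next
  case False
  let ?BM = "batch_measure D B"
  let ?G = "\<lambda>\<gamma>. grad (L \<gamma>) x"
  define m where "m = (\<integral>\<gamma>. ?G \<gamma> \<partial>D)"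
  let ?g = "\<lambda>b. gb B b x"
  interpret BM: prob_space ?BM by (rule BM_prob)
  have bmm: "(\<lambda>b. b j) \<in> measurable ?BM D" if "j < B" for j
    unfolding batch_measure_def by (rule measurable_component_singleton) (use that in auto)
  have gm: "?g \<in> borel_measurable ?BM" by (rule gsum_meas[OF bmm]) simp_all
  have Gi: "integrable ?BM (\<lambda>b. ?G (b j))" "(\<integral>b. ?G (b j) \<partial>?BM) = m" if "j < B" for j
    using comp_int[OF that G_int[OF False] G_meas] m_def by auto
  have Gsi: "integrable ?BM (\<lambda>b. (norm (?G (b j)))\<^sup>2)" if "j < B" for j
    using comp_int(1)[OF that sq_int[OF False]] G_meas by auto
  have si: "integrable ?BM (\<lambda>b. \<Sum>j<B. ?G (b j))"
    by (intro Bochner_Integration.integrable_sum Gi(1)) simp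
  have gi: "integrable ?BM ?g" unfolding gb_def
    by (intro integrable_scaleR_right si)
  have gint: "(\<integral>b. ?g b \<partial>?BM) = m"
    unfolding gb_def using si Gi B by (simp add: Bochner_Integration.integral_sum scaleR_scaleR sum_constant_scaleR)
  have bound: "(norm (?g b))\<^sup>2 \<le> (\<Sum>j<B. (norm (?G (b j)))\<^sup>2)" for b
  proof -
    have "norm (?g b) \<le> (1 / real B) * (\<Sum>j<B. norm (?G (b j)))"
      unfolding gb_def using norm_sum[of "\<lambda>j. ?G (b j)" "{..<B}"]
      by (simp add: divide_right_mono)
    then have "(norm (?g b))\<^sup>2 \<le> ((1 / real B) * (\<Sum>j<B. norm (?G (b j))))\<^sup>2"
      by (intro power_mono) auto
    also have "\<dots> = (1 / real B)\<^sup>2 * (\<Sum>j<B. norm (?G (b j)))\<^sup>2" by (simp add: power_divide)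
    also have "\<dots> \<le> (1 / real B)\<^sup>2 * ((\<Sum>j<B. (norm (?G (b j)))\<^sup>2) * real B)"
      using sum_squared_le_sum_of_squares[of "\<lambda>j. norm (?G (b j))" "{..<B}"]
      by (intro mult_left_mono) auto
    also have "\<dots> = (\<Sum>j<B. (norm (?G (b j)))\<^sup>2) / real B"
      using B by (simp add: power2_eq_square field_simps)
    also have "\<dots> \<le> (\<Sum>j<B. (norm (?G (b j)))\<^sup>2)"
      using B divide_left_mono[of 1 "real B" "\<Sum>j<B. (norm (?G (b j)))\<^sup>2"]
      by (simp add: sum_nonneg)
    finally show ?thesis .
  qed
  have gsi: "integrable ?BM (\<lambda>b. (norm (?g b))\<^sup>2)"
  proof (rule Bochner_Integration.integrable_bound[of _ "\<lambda>b. \<Sum>j<B. (norm (?G (b j)))\<^sup>2"])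
    show "integrable ?BM (\<lambda>b. \<Sum>j<B. (norm (?G (b j)))\<^sup>2)" using Gsi by auto
    show "(\<lambda>b. (norm (?g b))\<^sup>2) \<in> borel_measurable ?BM" using gm by measurable
    show "AE b in ?BM. norm ((norm (?g b))\<^sup>2) \<le> norm (\<Sum>j<B. (norm (?G (b j)))\<^sup>2)"
      using bound by (auto intro!: AE_I2 order_trans[OF _ abs_ge_self])
  qed
  have expand: "(norm (v - m))\<^sup>2 = (norm v)\<^sup>2 - 2 * (v \<bullet> m) + (norm m)\<^sup>2" for v
    unfolding power2_norm_eq_inner by (simp add: inner_diff_left inner_diff_right inner_commute)
  have di: "integrable ?BM (\<lambda>b. (norm (?g b - m))\<^sup>2)"
    unfolding expand using gsi gi by auto
  have dint: "(\<integral>b. (norm (?g b - m))\<^sup>2 \<partial>?BM) = (\<integral>b. (norm (?g b))\<^sup>2 \<partial>?BM) - (norm m)\<^sup>2"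
  proof -
    have "(\<integral>b. (norm (?g b - m))\<^sup>2 \<partial>?BM) =
        (\<integral>b. (norm (?g b))\<^sup>2 \<partial>?BM) - 2 * (\<integral>b. ?g b \<bullet> m \<partial>?BM) + (norm m)\<^sup>2"
      unfolding expand using gsi gi by (simp add: BM.prob_space)
    also have "(\<integral>b. ?g b \<bullet> m \<partial>?BM) = m \<bullet> m" using gi gint by simp
    finally show ?thesis by (simp add: power2_norm_eq_inner)
  qed
  have ci: "integrable ?BM (\<lambda>b. ((?g b - m) \<bullet> i)\<^sup>2)" if "i \<in> Basis" for i
  proof (rule Bochner_Integration.integrable_bound[OF di])
    show "(\<lambda>b. ((?g b - m) \<bullet> i)\<^sup>2) \<in> borel_measurable ?BM" using gm by measurable
    have "((v \<bullet> i))\<^sup>2 \<le> (norm v)\<^sup>2" for v :: 'a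
      using power_mono[OF Basis_le_norm[OF that, of v] abs_ge_zero[of "v \<bullet> i"], of 2] by simp
    then show "AE b in ?BM. norm (((?g b - m) \<bullet> i)\<^sup>2) \<le> norm ((norm (?g b - m))\<^sup>2)"
      by auto
  qed
  have sumsq: "(\<Sum>i\<in>Basis. (v \<bullet> i)\<^sup>2) = (norm v)\<^sup>2" for v :: 'a
    unfolding power2_norm_eq_inner euclidean_inner[of v v] by (simp add: power2_eq_square)
  have "noise_tr D L B x = (\<Sum>i\<in>Basis. \<integral>b. ((?g b - m) \<bullet> i)\<^sup>2 \<partial>?BM)"
    unfolding noise_tr_def grad_bloss' gint by simp
  also have "\<dots> = (\<integral>b. (\<Sum>i\<in>Basis. ((?g b - m) \<bullet> i)\<^sup>2) \<partial>?BM)"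
    using ci by (simp add: Bochner_Integration.integral_sum)
  also have "\<dots> = (\<integral>b. (norm (?g b - m))\<^sup>2 \<partial>?BM)" by (simp add: sumsq)
  finally have nt: "noise_tr D L B x = (\<integral>b. (norm (?g b))\<^sup>2 \<partial>?BM) - (norm m)\<^sup>2"
    using dint by simp
  have gp: "grad (popL D L) x = m"
    unfolding m_def by (rule grad_eq[OF grad_L[OF False]])
  have "F B x = ennreal (\<integral>b. (norm (?g b))\<^sup>2 \<partial>?BM)"
    unfolding F_def by (rule nn_integral_eq_integral[OF gsi]) auto
  then show ?thesis using nt gp by simp
qed

end



context sgd_setting begin

lemma recur:
  assumes B: "B > 0" and ex: "limits_exist D L lam B eta x0"
  shows "Rseq D L lam B eta x0 (Suc t) = (1 - eta * lam)\<^sup>2 * Rseq D L lam B eta x0 t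
           + eta\<^sup>2 * (Gseq D L lam B eta x0 t + Nseq D L lam B eta x0 t)"
proof -
  let ?a = "(1 - eta * lam)\<^sup>2"
  let ?u = "\<lambda>t \<omega>. (norm (X lam B eta x0 \<omega> t))\<^sup>2"
  let ?v = "\<lambda>\<omega>. (norm (grad (popL D L) (X lam B eta x0 \<omega> t)))\<^sup>2"
  let ?w = "\<lambda>\<omega>. noise_tr D L B (X lam B eta x0 \<omega> t)"
  let ?h = "\<lambda>\<omega>. (norm (gb B (kth_batch B \<omega> t) (X lam B eta x0 \<omega> t)))\<^sup>2"
  have ui: "integrable Sp (?u s)" for s using ex unfolding limits_exist_def by blast
  have vi: "integrable Sp ?v" and wi: "integrable Sp ?w"
    using ex unfolding limits_exist_def by blast+
  have c: "(\<lambda>\<omega>. kth_batch B \<omega> t j) \<in> measurable Sp D" for j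
    unfolding kth_batch_def sample_space_def by measurable
  have gm[measurable]: "(\<lambda>\<omega>. gb B (kth_batch B \<omega> t) (X lam B eta x0 \<omega> t)) \<in> borel_measurable Sp"
    by (intro gsum_meas c sgd_meas)
  have hm: "?h \<in> borel_measurable Sp" by measurable
  have um: "?u t \<in> borel_measurable Sp" using ui by auto
  have "ennreal (Rseq D L lam B eta x0 (Suc t)) = (\<integral>\<^sup>+ \<omega>. ennreal (?u (Suc t) \<omega>) \<partial>Sp)"
    unfolding Rseq_def by (rule nn_integral_eq_integral[symmetric, OF ui]) simp
  also have "\<dots> = (\<integral>\<^sup>+ \<omega>. ennreal (?a * ?u t \<omega>) + ennreal (eta\<^sup>2) * ennreal (?h \<omega>) \<partial>Sp)"
  proof (intro nn_integral_cong)
    fix \<omega>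
    have e: "?u (Suc t) \<omega> = ?a * ?u t \<omega> + eta\<^sup>2 * ?h \<omega>" by (rule sgd_norm)
    show "ennreal (?u (Suc t) \<omega>) = ennreal (?a * ?u t \<omega>) + ennreal (eta\<^sup>2) * ennreal (?h \<omega>)"
      unfolding e by (simp add: ennreal_plus ennreal_mult)
  qed
  also have "\<dots> = (\<integral>\<^sup>+ \<omega>. ennreal (?a * ?u t \<omega>) \<partial>Sp) + ennreal (eta\<^sup>2) * (\<integral>\<^sup>+ \<omega>. ennreal (?h \<omega>) \<partial>Sp)"
    using um hm by (simp add: nn_integral_add nn_integral_cmult)
  also have "(\<integral>\<^sup>+ \<omega>. ennreal (?h \<omega>) \<partial>Sp) = (\<integral>\<^sup>+ \<omega>. ennreal (?v \<omega> + ?w \<omega>) \<partial>Sp)"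
    unfolding tonelli by (simp add: F_eq[OF B])
  also have "\<dots> = ennreal (Gseq D L lam B eta x0 t + Nseq D L lam B eta x0 t)"
    unfolding Gseq_def Nseq_def
    by (subst nn_integral_eq_integral) (use vi wi noise_nonneg in auto)
  also have "(\<integral>\<^sup>+ \<omega>. ennreal (?a * ?u t \<omega>) \<partial>Sp) = ennreal (?a * Rseq D L lam B eta x0 t)"
    unfolding Rseq_def
    by (subst nn_integral_eq_integral) (use ui in auto)
  finally have eq: "ennreal (Rseq D L lam B eta x0 (Suc t)) =
      ennreal (?a * Rseq D L lam B eta x0 t) + ennreal (eta\<^sup>2) * ennreal (Gseq D L lam B eta x0 t + Nseq D L lam B eta x0 t)" .
  have nn: "0 \<le> Rseq D L lam B eta x0 t" "0 \<le> Gseq D L lam B eta x0 t" "0 \<le> Nseq D L lam B eta x0 t"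
    unfolding Rseq_def Gseq_def Nseq_def by (auto simp: noise_nonneg intro!: integral_nonneg)
  have "ennreal (Rseq D L lam B eta x0 (Suc t)) =
      ennreal (?a * Rseq D L lam B eta x0 t + eta\<^sup>2 * (Gseq D L lam B eta x0 t + Nseq D L lam B eta x0 t))"
    unfolding eq using nn by (simp only: ennreal_mult[symmetric] ennreal_plus[symmetric] add_nonneg_nonneg
      mult_nonneg_nonneg zero_le_power2)
  moreover have "0 \<le> Rseq D L lam B eta x0 (Suc t)" unfolding Rseq_def by (rule Bochner_Integration.integral_nonneg) simp
  moreover have "0 \<le> ?a * Rseq D L lam B eta x0 t + eta\<^sup>2 * (Gseq D L lam B eta x0 t + Nseq D L lam B eta x0 t)"
    using nn by simp
  ultimately show ?thesis by (simp del: sgd.simps)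
qed

lemma limit_eq:
  assumes B: "B > 0" and ex: "limits_exist D L lam B eta x0"
  shows "R_inf D L lam B eta x0 = (1 - eta * lam)\<^sup>2 * R_inf D L lam B eta x0
           + eta\<^sup>2 * (G_inf D L lam B eta x0 + N_inf D L lam B eta x0)"
    and "0 \<le> R_inf D L lam B eta x0" "0 \<le> G_inf D L lam B eta x0" "0 \<le> N_inf D L lam B eta x0"
proof -
  have r: "Rseq D L lam B eta x0 \<longlonglongrightarrow> R_inf D L lam B eta x0"
    using ex unfolding limits_exist_def R_inf_def by (simp add: convergent_LIMSEQ_iff)
  have g: "Gseq D L lam B eta x0 \<longlonglongrightarrow> G_inf D L lam B eta x0"
    using ex unfolding limits_exist_def G_inf_def by (simp add: convergent_LIMSEQ_iff)
  have n: "Nseq D L lam B eta x0 \<longlonglongrightarrow> N_inf D L lam B eta x0"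
    using ex unfolding limits_exist_def N_inf_def by (simp add: convergent_LIMSEQ_iff)
  have "(\<lambda>t. Rseq D L lam B eta x0 (Suc t)) \<longlonglongrightarrow> R_inf D L lam B eta x0"
    using r by (rule LIMSEQ_Suc)
  moreover have "(\<lambda>t. Rseq D L lam B eta x0 (Suc t)) \<longlonglongrightarrow> (1 - eta * lam)\<^sup>2 * R_inf D L lam B eta x0
           + eta\<^sup>2 * (G_inf D L lam B eta x0 + N_inf D L lam B eta x0)"
    unfolding recur[OF B ex] by (intro tendsto_intros r g n)
  ultimately show "R_inf D L lam B eta x0 = (1 - eta * lam)\<^sup>2 * R_inf D L lam B eta x0
           + eta\<^sup>2 * (G_inf D L lam B eta x0 + N_inf D L lam B eta x0)"
    by (rule LIMSEQ_unique)
  show "0 \<le> R_inf D L lam B eta x0"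
    by (rule LIMSEQ_le_const[OF r]) (auto simp: Rseq_def)
  show "0 \<le> G_inf D L lam B eta x0"
    by (rule LIMSEQ_le_const[OF g]) (auto simp: Gseq_def)
  show "0 \<le> N_inf D L lam B eta x0"
    by (rule LIMSEQ_le_const[OF n]) (auto simp: Nseq_def noise_nonneg intro!: integral_nonneg)
qed

end



lemma alg:
  fixes R1 G1 N1 R2 G2 N2 eta lam C k :: real
  assumes nn: "0 \<le> R1" "0 \<le> G1" "0 \<le> N1" "0 \<le> R2" "0 \<le> G2" "0 \<le> N2"
    and lam: "lam > 0" and eta: "eta > 0" and k: "k > 0"
    and E1: "R1 = (1 - eta * lam)\<^sup>2 * R1 + eta\<^sup>2 * (G1 + N1)"
    and E2: "R2 = (1 - (k * eta) * lam)\<^sup>2 * R2 + (k * eta)\<^sup>2 * (G2 + N2)"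
    and hyp: "N2 / G2 < (1 - 1 / k) * (1 / (C\<^sup>2 - 1)) - 1 / k"
    and C0: "0 < C" and Ck: "C < sqrt k"
    and r1: "1 / C \<le> R1 / R2"
    and n1: "1 / C \<le> N1 / (k * N2)" and n2: "N1 / (k * N2) \<le> C"
    and g1: "1 / C \<le> G1 / G2" and g2: "G1 / G2 \<le> C"
  shows False
proof -
  have iC: "0 < 1 / C" using C0 by simp
  have R2p: "R2 > 0" using r1 iC nn(4) by (cases "R2 = 0") auto
  have N2p: "N2 > 0" using n1 iC nn(6) by (cases "N2 = 0") auto
  have G2p: "G2 > 0" using g1 iC nn(5) by (cases "G2 = 0") auto
  have C2k: "C\<^sup>2 < k"
    using power_strict_mono[OF Ck, of 2] C0 k by simp
  have G1le: "G1 \<le> C * G2" using g2 G2p by (simp add: divide_le_eq)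
  have N1le: "N1 \<le> C * (k * N2)" using n2 N2p k by (simp add: divide_le_eq)
  have R2le: "R2 \<le> C * R1" using r1 R2p C0 by (simp add: divide_le_eq le_divide_eq field_simps)
  define r where "r = N2 / G2"
  have r0: "0 \<le> r" unfolding r_def using nn by simp
  show False
  proof (cases "C\<^sup>2 \<le> 1")
    case True
    have "(1 - 1 / k) * (1 / (C\<^sup>2 - 1)) - 1 / k < 0"
    proof (cases "k \<ge> 1")
      case True
      have "1 - 1 / k \<ge> 0" using True by (simp add: field_simps)
      moreover have "1 / (C\<^sup>2 - 1) \<le> 0" using \<open>C\<^sup>2 \<le> 1\<close> by simp
      ultimately have "(1 - 1 / k) * (1 / (C\<^sup>2 - 1)) \<le> 0" by (rule mult_nonneg_nonpos)
      moreover have "0 < 1 / k" using k by simp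
      ultimately show ?thesis by linarith
    next
      case False
      then have c1: "C\<^sup>2 - 1 < 0" using C2k by simp
      have "(1 - 1 / k) * (1 / (C\<^sup>2 - 1)) = (1 / k - 1) / (1 - C\<^sup>2)"
        using c1 k by (simp add: field_simps)
      also have "\<dots> < 1 / k"
        using c1 C2k k by (simp add: field_simps)
      finally show ?thesis by simp
    qed
    then show False using hyp r0 r_def by simp
  next
    case False
    then have C1: "C\<^sup>2 > 1" by simp
    then have k1: "k > 1" using C2k by simp
    have "r < (1 - 1 / k) * (1 / (C\<^sup>2 - 1)) - 1 / k" using hyp r_def by simp
    then have "k * (C\<^sup>2 - 1) * r < k * (C\<^sup>2 - 1) * ((1 - 1 / k) * (1 / (C\<^sup>2 - 1)) - 1 / k)"
      using C1 k by (intro mult_strict_left_mono) auto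
    also have "\<dots> = k - C\<^sup>2" using C1 k by (simp add: field_simps)
    finally have "C\<^sup>2 * (1 + k * r) < k * (1 + r)" by (simp add: algebra_simps)
    then have "G2 * (C\<^sup>2 * (1 + k * r)) < G2 * (k * (1 + r))"
      using G2p by (intro mult_strict_left_mono) auto
    moreover have Gr: "G2 * r = N2" unfolding r_def using G2p by simp
    moreover have "G2 * (C\<^sup>2 * (1 + k * r)) = C\<^sup>2 * (G2 + k * (G2 * r))" by (simp add: algebra_simps)
    moreover have "G2 * (k * (1 + r)) = k * (G2 + G2 * r)" by (simp add: algebra_simps)
    ultimately have key: "C\<^sup>2 * (G2 + k * N2) < k * (G2 + N2)" by simp
    have e1: "R1 * lam * (2 - eta * lam) = eta * (G1 + N1)"
    proof -
      have "eta * (R1 * lam * (2 - eta * lam)) = eta * (eta * (G1 + N1))"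
        using E1 by (simp add: power2_eq_square algebra_simps)
      then show ?thesis using eta by simp
    qed
    have e2: "R2 * lam * (2 - k * eta * lam) = k * eta * (G2 + N2)"
    proof -
      have "(k * eta) * (R2 * lam * (2 - k * eta * lam)) = (k * eta) * (k * eta * (G2 + N2))"
        using E2 by (simp add: power2_eq_square algebra_simps)
      then show ?thesis using eta k by simp
    qed
    have pos2: "k * eta * (G2 + N2) > 0" using k eta G2p N2p by simp
    have d2: "2 - k * eta * lam > 0"
    proof (rule ccontr)
      assume "\<not> ?thesis"
      then have "R2 * lam * (2 - k * eta * lam) \<le> 0"
        using R2p lam by (intro mult_nonneg_nonpos) auto
      with e2 pos2 show False by simp
    qed
    have d12: "2 - k * eta * lam < 2 - eta * lam"
      using k1 eta lam by (simp add: mult_strict_right_mono)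
    have "C * (R1 * lam * (2 - eta * lam)) = C * eta * (G1 + N1)" using e1 by simp
    also have "\<dots> \<le> C * eta * (C * (G2 + k * N2))"
      using G1le N1le C0 eta by (intro mult_left_mono) (auto simp: algebra_simps)
    also have "\<dots> = eta * (C\<^sup>2 * (G2 + k * N2))" by (simp add: power2_eq_square)
    also have "\<dots> < eta * (k * (G2 + N2))" using key eta by simp
    also have "\<dots> = R2 * lam * (2 - k * eta * lam)" using e2 by simp
    also have "\<dots> < R2 * lam * (2 - eta * lam)"
      using d12 R2p lam by simp
    finally have "C * R1 * (lam * (2 - eta * lam)) < R2 * (lam * (2 - eta * lam))"
      by (simp add: algebra_simps)
    then have "C * R1 < R2"
      using d2 d12 lam by (smt (verit) mult_right_mono zero_less_mult_iff)
    with R2le show False by simp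
  qed
qed


theorem theorem3:
  fixes D :: "'g measure" and \<L> :: "'g \<Rightarrow> 'a::euclidean_space \<Rightarrow> real"
    and lam \<eta> C \<kappa> :: real and B B' :: nat and x0 :: 'a
  assumes D: "prob_space D"
    and scale_inv: "\<And>\<gamma>. scale_invariant (\<L> \<gamma>)"
    and diff: "\<And>\<gamma> x. x \<noteq> 0 \<Longrightarrow> \<exists>g. GDERIV (\<L> \<gamma>) x :> g"
    and meas: "(\<lambda>(\<gamma>, x). grad (\<L> \<gamma>) x) \<in> borel_measurable (D \<Otimes>\<^sub>M borel)"
    and sq_int: "\<And>x. x \<noteq> 0 \<Longrightarrow> integrable D (\<lambda>\<gamma>. (norm (grad (\<L> \<gamma>) x))\<^sup>2)"
    and grad_L: "\<And>x. x \<noteq> 0 \<Longrightarrow> GDERIV (popL D \<L>) x :> (\<integral>\<gamma>. grad (\<L> \<gamma>) x \<partial>D)"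
    and lam: "lam > 0" and eta: "\<eta> > 0" and B: "B > 0" and kappa: "\<kappa> > 0"
    and B': "real B' = \<kappa> * real B"
    and ex1: "limits_exist D \<L> lam B \<eta> x0"
    and ex2: "limits_exist D \<L> lam B' (\<kappa> * \<eta>) x0"
    and hyp: "N_inf D \<L> lam B' (\<kappa> * \<eta>) x0 / G_inf D \<L> lam B' (\<kappa> * \<eta>) x0
              < (1 - 1 / \<kappa>) * (1 / (C\<^sup>2 - 1)) - 1 / \<kappa>"
  shows "\<not> LSI D \<L> lam x0 B \<eta> B' C \<kappa>"
proof
  assume lsi: "LSI D \<L> lam x0 B \<eta> B' C \<kappa>"
  have st: "sgd_setting D \<L>"
    unfolding sgd_setting_def using D scale_inv diff meas sq_int grad_L by blast
  have B'p: "B' > 0"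
  proof -
    have "real B' > 0" using B' kappa B by simp
    then show ?thesis by simp
  qed
  note l1 = sgd_setting.limit_eq[OF st B ex1]
  note l2 = sgd_setting.limit_eq[OF st B'p ex2]
  show False
    by (rule alg[OF l1(2-4) l2(2-4) lam eta kappa l1(1) l2(1) hyp])
       (use lsi in \<open>simp_all add: LSI_def\<close>)
qed

end
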